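(* Let $n\in\mathbb{N}$, $1<p,q<\infty$, $0<r<\infty$ with $p+q\geq r$, $\delta\in[0,1]\cap\left[\frac{r-q}{r},\frac{p}{r}\right]$, and $a,b,c\in\mathbb{R}$ with $\frac{\delta r}{p}+\frac{(1-\delta)r}{q}=1$ and $c=\delta(a-1)+b(1-\delta)$. Let $|x|$ denote the Euclidean norm on $\mathbb{R}^n$ and $\nabla$ the standard gradient. Then for all $f\in C_0^\infty(\mathbb{R}^n\setminus\{0\})$: if $n\neq p(1-a)$, $$\||x|^{c}f\|_{L^{r}(\mathbb{R}^n)}\leq\left|\frac{p}{n-p(1-a)}\right|^{\delta}\||x|^{a}\nabla f\|^{\delta}_{L^{p}(\mathbb{R}^n)}\||x|^{b}f\|^{1-\delta}_{L^{q}(\mathbb{R}^n)};$$ if $n=p(1-a)$, $$\||x|^{c}f\|_{L^{r}(\mathbb{R}^n)}\leq p^{\delta}\||x|^{a}\log|x|\,\nabla f\|^{\delta}_{L^{p}(\mathbb{R}^n)}\||x|^{b}f\|^{1-\delta}_{L^{q}(\mathbb{R}^n)}.$$ Here $\||x|^a\nabla f\|_{L^p}$ means $\left(\int_{\mathbb{R}^n}|x|^{ap}|\nabla f(x)|^p dx\right)^{1/p}$ with $|\nabla f|$ the Euclidean length. *)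

theory Defs
  imports "HOL-Analysis.Analysis"
begin

text \<open>Infinitely (Frechet) differentiable real-valued functions on a Euclidean space:
  f is differentiable everywhere and every partial derivative is again smooth
  (greatest fixed point, i.e. derivatives of all orders exist).\<close>
coinductive smooth_fun :: "('a::euclidean_space \<Rightarrow> real) \<Rightarrow> bool" where
  "\<lbrakk>\<forall>x. f differentiable (at x);
    \<forall>i\<in>Basis. smooth_fun (\<lambda>x. frechet_derivative f (at x) i)\<rbrakk> \<Longrightarrow> smooth_fun f"

definition C0_inf_punct :: "('a::euclidean_space \<Rightarrow> real) \<Rightarrow> bool" where
  "C0_inf_punct f \<longleftrightarrow> smooth_fun f \<and>
     (\<exists>K. compact K \<and> 0 \<notin> K \<and> (\<forall>x. x \<notin> K \<longrightarrow> f x = 0))"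

definition grad :: "('a::euclidean_space \<Rightarrow> real) \<Rightarrow> 'a \<Rightarrow> 'a" where
  "grad f x = (\<Sum>i\<in>Basis. frechet_derivative f (at x) i *\<^sub>R i)"

definition Lp_norm :: "real \<Rightarrow> ('a::euclidean_space \<Rightarrow> real) \<Rightarrow> real" where
  "Lp_norm p g = (\<integral>x. \<bar>g x\<bar> powr p \<partial>lborel) powr (1 / p)"

end

theory Submission
  imports Defs
begin


definition Dp :: "real \<Rightarrow> real \<Rightarrow> real" where
  "Dp p s = p * \<bar>s\<bar> powr (p - 1) * sgn s"

lemma Dp_0[simp]: "Dp p 0 = 0" by (simp add: Dp_def)

lemma abs_Dp: "p \<ge> 0 \<Longrightarrow> \<bar>Dp p s\<bar> = p * \<bar>s\<bar> powr (p - 1)"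
  by (cases "s = 0") (auto simp: Dp_def abs_mult abs_sgn_eq)

lemma absp_deriv:
  assumes "p > 1"
  shows "((\<lambda>s. \<bar>s\<bar> powr p) has_real_derivative Dp p s) (at s)"
proof -
  consider "s = 0" | "s > 0" | "s < 0" by linarith
  then show ?thesis
  proof cases
    case 1
    have lim: "((\<lambda>h. \<bar>h\<bar> powr (p-1)) \<longlongrightarrow> 0) (at (0::real))"
      by (rule tendsto_zero_powrI) (use assms in \<open>auto intro!: tendsto_eq_intros\<close>)
    have ev: "\<forall>\<^sub>F h in at (0::real). \<bar>h\<bar> powr (p-1) = \<bar>(\<bar>0 + h\<bar> powr p - \<bar>0\<bar> powr p) / h\<bar>"
      unfolding eventually_at_filter
      by (auto simp: powr_diff abs_divide)
    have "((\<lambda>h. (\<bar>0 + h\<bar> powr p - \<bar>0\<bar> powr p) / h) \<longlongrightarrow> 0) (at (0::real))"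
      apply (rule tendsto_rabs_zero_cancel)
      using tendsto_cong[OF ev] lim by simp
    then show ?thesis using 1 by (simp add: DERIV_def)
  next
    case 2
    have "((\<lambda>s. s powr p) has_real_derivative p * s powr (p - 1)) (at s)"
      using 2 by (rule has_real_derivative_powr)
    moreover have "\<forall>\<^sub>F x in nhds s. \<bar>x\<bar> powr p = x powr p"
      using eventually_nhds_in_open[of "{0<..}" s] 2
      by (auto elim!: eventually_mono)
    ultimately show ?thesis using 2
      by (subst DERIV_cong_ev[OF refl _ refl]) (auto simp: Dp_def)
  next
    case 3
    have "((\<lambda>x. (- x) powr p) has_real_derivative p * (- s) powr (p - of_nat 1) * (-1)) (at s)"
      by (rule DERIV_fun_powr) (use 3 in \<open>auto intro!: derivative_eq_intros\<close>)
    moreover have "\<forall>\<^sub>F x in nhds s. \<bar>x\<bar> powr p = (-x) powr p"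
      using eventually_nhds_in_open[of "{..<0}" s] 3
      by (auto elim!: eventually_mono)
    ultimately show ?thesis using 3
      by (subst DERIV_cong_ev[OF refl _ refl]) (auto simp: Dp_def)
  qed
qed

lemma Dp_cont:
  assumes "p > 1"
  shows "continuous_on UNIV (Dp p)"
proof -
  have "isCont (Dp p) s" for s
  proof (cases "s = 0")
    case True
    have lim0: "((\<lambda>h. \<bar>h\<bar> powr (p-1)) \<longlongrightarrow> 0) (at (0::real))"
      by (rule tendsto_zero_powrI) (use assms in \<open>auto intro!: tendsto_eq_intros\<close>)
    have lim: "((\<lambda>h. p * \<bar>h\<bar> powr (p-1)) \<longlongrightarrow> 0) (at (0::real))"
      using tendsto_mult_right_zero[OF lim0, of p] by simp
    have "(Dp p \<longlongrightarrow> 0) (at 0)"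
      apply (rule tendsto_rabs_zero_cancel)
      using lim assms by (simp add: abs_Dp)
    then show ?thesis using True by (simp add: isCont_def)
  next
    case False
    then show ?thesis unfolding Dp_def
      by (intro continuous_intros) auto
  qed
  then show ?thesis by (simp add: continuous_on_eq_continuous_at)
qed



lemma grad_inner:
  assumes "linear L"
  shows "L v = (\<Sum>i\<in>Basis. L i *\<^sub>R i) \<bullet> (v::'a::euclidean_space)"
proof -
  have "L v = L (\<Sum>i\<in>Basis. (v \<bullet> i) *\<^sub>R i)" by (simp add: euclidean_representation)
  also have "\<dots> = (\<Sum>i\<in>Basis. (v \<bullet> i) * L i)"
    using assms by (simp add: linear_sum linear_scale)
  also have "\<dots> = (\<Sum>i\<in>Basis. L i *\<^sub>R i) \<bullet> v"
    by (simp add: inner_sum_right inner_commute mult.commute)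
  finally show ?thesis .
qed

lemma smooth_D: "smooth_fun f \<Longrightarrow> (\<forall>x. f differentiable (at x)) \<and> (\<forall>i\<in>Basis. smooth_fun (\<lambda>x. frechet_derivative f (at x) i))"
  by (erule smooth_fun.cases) simp

lemma C0_facts:
  fixes f :: "'a::euclidean_space \<Rightarrow> real"
  assumes "C0_inf_punct f"
  obtains K where "compact K" "0 \<notin> K" "\<And>x. x \<notin> K \<Longrightarrow> f x = 0"
    "\<And>x. (f has_derivative (\<lambda>v. grad f x \<bullet> v)) (at x)"
    "continuous_on UNIV (grad f)"
    "\<And>x. x \<notin> K \<Longrightarrow> grad f x = 0"
proof -
  from assms obtain K where K: "compact K" "0 \<notin> K" "\<And>x. x \<notin> K \<Longrightarrow> f x = 0"
    and sm: "smooth_fun f" unfolding C0_inf_punct_def by blast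
  have "(\<forall>x. f differentiable (at x)) \<and> (\<forall>i\<in>Basis. smooth_fun (\<lambda>x. frechet_derivative f (at x) i))"
    by (rule smooth_D[OF sm])
  then have dif: "\<forall>x. f differentiable (at x)"
    and sm2: "\<forall>i\<in>Basis. smooth_fun (\<lambda>x. frechet_derivative f (at x) i)" by auto
  have der: "(f has_derivative (\<lambda>v. grad f x \<bullet> v)) (at x)" for x
  proof -
    have h: "(f has_derivative frechet_derivative f (at x)) (at x)"
      using dif frechet_derivative_works by blast
    have "frechet_derivative f (at x) = (\<lambda>v. grad f x \<bullet> v)"
      unfolding grad_def by (rule ext, rule grad_inner[OF has_derivative_linear[OF h]])
    with h show ?thesis by metis
  qed
  have "continuous_on UNIV (\<lambda>x. frechet_derivative f (at x) i)" if "i \<in> Basis" for i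
  proof -
    from sm2 that have smi: "smooth_fun (\<lambda>x. frechet_derivative f (at x) i)" by blast
    have "\<forall>x. (\<lambda>x. frechet_derivative f (at x) i) differentiable (at x)"
      using smooth_D[OF smi] by blast
    then show ?thesis
      by (simp add: continuous_on_eq_continuous_at differentiable_imp_continuous_within)
  qed
  then have cg: "continuous_on UNIV (grad f)"
    unfolding grad_def by (intro continuous_intros) auto
  have g0: "grad f x = 0" if "x \<notin> K" for x
  proof -
    have o: "open (- K)" using K(1) compact_imp_closed by blast
    have "((\<lambda>_. 0) has_derivative (\<lambda>v. 0)) (at x)" by simp
    then have "(f has_derivative (\<lambda>v. 0)) (at x)"
      by (rule has_derivative_transform_within_open[OF _ o]) (use K(3) that in auto)
    then have e: "(\<lambda>v. 0) = frechet_derivative f (at x)" by (rule frechet_derivative_at)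
    show ?thesis unfolding grad_def e[symmetric] by simp
  qed
  show ?thesis using that K der cg g0 by blast
qed



lemma integrable_cpt:
  fixes g :: "'a::euclidean_space \<Rightarrow> real"
  assumes "compact K" "continuous_on K g" "\<And>x. x \<notin> K \<Longrightarrow> g x = 0"
  shows "integrable lborel g"
proof -
  have "g = (\<lambda>x. indicator K x *\<^sub>R g x)" using assms(3) by (auto simp: indicator_def fun_eq_iff)
  then show ?thesis using borel_integrable_compact[OF assms(1,2)] by simp
qed

lemma scale_integral:
  fixes g :: "'a::euclidean_space \<Rightarrow> real"
  assumes "g integrable_on UNIV" "bounded S" "\<And>x. x \<notin> S \<Longrightarrow> g x = 0" "t > 0"
  shows "integral UNIV (\<lambda>x. g (t *\<^sub>R x)) = integral UNIV g / t ^ DIM('a)"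
proof -
  obtain a where S: "S \<subseteq> cbox (-a) a" using bounded_subset_cbox_symmetric[OF assms(2)] by blast
  have "(g has_integral integral UNIV g) (cbox (-a) a)"
  proof -
    have eq: "(\<lambda>x. if x \<in> cbox (-a) a then g x else 0) = g" using S assms(3) by (force simp: fun_eq_iff)
    have "((\<lambda>x. if x \<in> cbox (-a) a then g x else 0) has_integral integral UNIV g) UNIV"
      using eq integrable_integral[OF assms(1)] by simp
    then show ?thesis using has_integral_restrict_UNIV by blast
  qed
  from has_integral_affinity[OF this, of t 0]
  have "((\<lambda>x. g (t *\<^sub>R x)) has_integral (1/\<bar>t\<bar>^DIM('a)) *\<^sub>R integral UNIV g)
      ((\<lambda>x. (1/t) *\<^sub>R x) ` cbox (-a) a)" using assms(4) by simp
  then have "((\<lambda>x. g (t *\<^sub>R x)) has_integral (1/\<bar>t\<bar>^DIM('a)) *\<^sub>R integral UNIV g) UNIV"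
  proof (rule has_integral_on_superset)
    fix x assume x: "x \<notin> (\<lambda>x. (1/t) *\<^sub>R x) ` cbox (-a) a"
    show "g (t *\<^sub>R x) = 0"
    proof (rule ccontr)
      assume "g (t *\<^sub>R x) \<noteq> 0"
      then have "t *\<^sub>R x \<in> cbox (-a) a" using S assms(3) by blast
      moreover have "x = (1/t) *\<^sub>R (t *\<^sub>R x)" using assms(4) by simp
      ultimately show False using x by blast
    qed
  qed auto
  then show ?thesis using assms(4) by (simp add: integral_unique divide_inverse)
qed

lemma holder:
  fixes F G :: "'a::euclidean_space \<Rightarrow> real"
  assumes PQ: "P > 1" "Q > 1" "1/P + 1/Q = 1" and nn: "\<And>x. F x \<ge> 0" "\<And>x. G x \<ge> 0"
    and i1: "integrable lborel (\<lambda>x. F x powr P)" and i2: "integrable lborel (\<lambda>x. G x powr Q)"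
    and i3: "integrable lborel (\<lambda>x. F x * G x)"
  shows "(\<integral>x. F x * G x \<partial>lborel)
      \<le> (\<integral>x. F x powr P \<partial>lborel) powr (1/P) * (\<integral>x. G x powr Q \<partial>lborel) powr (1/Q)"
proof -
  define a where "a = (\<integral>x. F x powr P \<partial>lborel)"
  define b where "b = (\<integral>x. G x powr Q \<partial>lborel)"
  have a0: "a \<ge> 0" unfolding a_def by (rule integral_nonneg_AE) auto
  have b0: "b \<ge> 0" unfolding b_def by (rule integral_nonneg_AE) auto
  consider "a = 0" | "b = 0" | "a > 0" "b > 0" using a0 b0 by linarith
  then show ?thesis
  proof cases
    case 1
    then have "AE x in lborel. F x powr P = 0"
      using integral_nonneg_eq_0_iff_AE[OF i1] unfolding a_def by auto
    then have "AE x in lborel. F x * G x = 0" by (auto elim!: eventually_mono)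
    then have "(\<integral>x. F x * G x \<partial>lborel) = 0" by (rule integral_eq_zero_AE)
    then show ?thesis using 1 by (simp add: a_def)
  next
    case 2
    then have "AE x in lborel. G x powr Q = 0"
      using integral_nonneg_eq_0_iff_AE[OF i2] unfolding b_def by auto
    then have "AE x in lborel. F x * G x = 0" by (auto elim!: eventually_mono)
    then have "(\<integral>x. F x * G x \<partial>lborel) = 0" by (rule integral_eq_zero_AE)
    then show ?thesis using 2 by (simp add: b_def)
  next
    case 3
    define \<alpha> where "\<alpha> = a powr (1/P)"
    define \<beta> where "\<beta> = b powr (1/Q)"
    have al: "\<alpha> > 0" "\<beta> > 0" using 3 by (auto simp: \<alpha>_def \<beta>_def)
    have alP: "\<alpha> powr P = a" "\<beta> powr Q = b" using 3 PQ by (auto simp: \<alpha>_def \<beta>_def powr_powr)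
    have pw: "F x * G x / (\<alpha> * \<beta>) \<le> F x powr P / (P * a) + G x powr Q / (Q * b)" for x
    proof -
      have "(F x / \<alpha>) * (G x / \<beta>) \<le> (F x / \<alpha>) powr P / P + (G x / \<beta>) powr Q / Q"
        by (rule Youngs_inequality) (use PQ nn al in auto)
      also have "\<dots> = F x powr P / (P * a) + G x powr Q / (Q * b)"
        using nn al alP by (simp add: powr_divide mult.commute)
      finally show ?thesis by simp
    qed
    have "(\<integral>x. F x * G x \<partial>lborel) / (\<alpha> * \<beta>) = (\<integral>x. F x * G x / (\<alpha> * \<beta>) \<partial>lborel)"
      by simp
    also have "\<dots> \<le> (\<integral>x. F x powr P / (P * a) + G x powr Q / (Q * b) \<partial>lborel)"
      by (rule integral_mono) (use i1 i2 i3 pw in auto)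
    also have "\<dots> = a / (P * a) + b / (Q * b)"
      using i1 i2 by (simp add: a_def b_def)
    also have "\<dots> = 1" using 3 PQ by simp
    finally have "(\<integral>x. F x * G x \<partial>lborel) \<le> \<alpha> * \<beta>"
      using al by (simp add: divide_le_eq)
    then show ?thesis by (simp add: \<alpha>_def \<beta>_def a_def b_def)
  qed
qed



lemma integral_UNIV_box:
  fixes g :: "'a::euclidean_space \<Rightarrow> real"
  assumes "g integrable_on S" "\<And>x. x \<notin> S \<Longrightarrow> g x = 0"
  shows "integral UNIV g = integral S g"
proof -
  have "(g has_integral integral S g) UNIV"
    by (rule has_integral_on_superset[OF integrable_integral[OF assms(1)]]) (use assms in auto)
  then show ?thesis by (rule integral_unique)
qed

lemma euler_identity:
  fixes f :: "'a::euclidean_space \<Rightarrow> real" and W :: "'a \<Rightarrow> real"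
  assumes K: "compact K" "0 \<notin> K" and fz: "\<And>x. x \<notin> K \<Longrightarrow> f x = 0"
    and fd: "\<And>x. (f has_derivative (\<lambda>v. grad f x \<bullet> v)) (at x)"
    and gc: "continuous_on UNIV (grad f)"
    and gz: "\<And>x. x \<notin> K \<Longrightarrow> grad f x = 0"
    and p: "p > 1"
    and Wc: "continuous_on (-{0}) W"
  shows "((\<lambda>t. integral UNIV (\<lambda>x. \<bar>f (t *\<^sub>R x)\<bar> powr p * W x)) has_field_derivative
           integral UNIV (\<lambda>x. Dp p (f x) * (grad f x \<bullet> x) * W x)) (at 1)"
proof -
  have "open (-K)" using K(1) compact_imp_closed by blast
  then obtain d where d: "d > 0" "ball 0 d \<subseteq> -K" using K(2) open_contains_ball_eq by blast
  have dK: "x \<notin> K" if "norm x < d" for x using d that by auto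
  obtain R where R: "R > 0" "\<And>x. x \<in> K \<Longrightarrow> norm x \<le> R"
    using compact_imp_bounded[OF K(1)] bounded_pos by blast
  obtain M where M: "cball 0 (2*R) \<subseteq> cbox (-M) (M::'a)"
    using bounded_subset_cbox_symmetric[of "cball 0 (2*R)"] by auto
  define B where "B = cbox (-M) M"
  define U where "U = {1/2..2::real}"
  define cut where "cut x = min 1 (max 0 (4 * norm x / d - 1))" for x :: 'a
  define V where "V x = W x * cut x" for x
  have cf: "continuous_on UNIV f"
    using fd by (meson continuous_on_eq_continuous_within has_derivative_continuous)
  have cDp: "continuous_on UNIV (Dp p)" using Dp_cont p .
  have cV: "continuous_on UNIV V"
  proof -
    have "isCont V x" for x
    proof (cases "x = 0")
      case True
      have "\<forall>\<^sub>F y in at 0. V y = 0"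
        unfolding eventually_at
        by (rule exI[of _ "d/4"]) (use d in \<open>auto simp: V_def cut_def dist_norm field_simps\<close>)
      then have "(V \<longlongrightarrow> 0) (at 0)" by (rule tendsto_eventually)
      then show ?thesis using True by (simp add: isCont_def V_def cut_def)
    next
      case False
      have "isCont W x"
        using Wc False continuous_on_eq_continuous_at[of "-{0}" W] by auto
      then show ?thesis unfolding V_def cut_def using d by (intro continuous_intros) auto
    qed
    then show ?thesis by (simp add: continuous_on_eq_continuous_at)
  qed
  have small: "f (t *\<^sub>R x) = 0 \<and> grad f (t *\<^sub>R x) = 0" if "t \<in> U" "norm x < d/2" for t x
  proof -
    have "norm (t *\<^sub>R x) = t * norm x" using that by (auto simp: U_def)
    also have "\<dots> \<le> 2 * norm x" using that by (auto simp: U_def intro!: mult_right_mono)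
    also have "\<dots> < d" using that by simp
    finally show ?thesis using dK fz gz by blast
  qed
  have big: "f (t *\<^sub>R x) = 0 \<and> grad f (t *\<^sub>R x) = 0" if "t \<in> U" "x \<notin> B" for t x
  proof (rule ccontr)
    assume "\<not> ?thesis"
    then have "t *\<^sub>R x \<in> K" using fz gz by blast
    then have "norm (t *\<^sub>R x) \<le> R" using R by blast
    moreover have "t \<ge> 0" using that by (simp add: U_def)
    ultimately have "t * norm x \<le> R" by simp
    moreover have "(1/2) * norm x \<le> t * norm x" using that by (intro mult_right_mono) (auto simp: U_def)
    ultimately have "norm x \<le> 2 * R" by linarith
    then show False using that M by (auto simp: B_def)
  qed
  have VW: "\<bar>f (t *\<^sub>R x)\<bar> powr p * V x = \<bar>f (t *\<^sub>R x)\<bar> powr p * W x" if "t \<in> U" for t x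
  proof (cases "norm x < d/2")
    case True then show ?thesis using small[OF that] by simp
  next
    case False
    then have "cut x = 1" using d by (auto simp: cut_def field_simps)
    then show ?thesis by (simp add: V_def)
  qed
  have VW': "Dp p (f x) * (grad f x \<bullet> x) * V x = Dp p (f x) * (grad f x \<bullet> x) * W x" for x
  proof (cases "norm x < d/2")
    case True then show ?thesis using small[of 1 x] by (simp add: U_def)
  next
    case False
    then have "cut x = 1" using d by (auto simp: cut_def field_simps)
    then show ?thesis by (simp add: V_def)
  qed
  define F where "F t x = \<bar>f (t *\<^sub>R x)\<bar> powr p * V x" for t x
  define Fx where "Fx t x = Dp p (f (t *\<^sub>R x)) * (grad f (t *\<^sub>R x) \<bullet> x) * V x" for t x
  have c1: "continuous_on UNIV (\<lambda>z::real \<times> 'a. f (fst z *\<^sub>R snd z))"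
    by (rule continuous_on_compose2[OF cf]) (auto intro!: continuous_intros)
  have c2: "continuous_on UNIV (\<lambda>z::real \<times> 'a. Dp p (f (fst z *\<^sub>R snd z)))"
    by (rule continuous_on_compose2[OF cDp c1]) auto
  have c3: "continuous_on UNIV (\<lambda>z::real \<times> 'a. grad f (fst z *\<^sub>R snd z))"
    by (rule continuous_on_compose2[OF gc]) (auto intro!: continuous_intros)
  have c4: "continuous_on UNIV (\<lambda>z::real \<times> 'a. V (snd z))"
    by (rule continuous_on_compose2[OF cV]) (auto intro!: continuous_intros)
  have cFx: "continuous_on (U \<times> B) (\<lambda>(t, x). Fx t x)"
  proof -
    have "continuous_on UNIV (\<lambda>z::real \<times> 'a. Dp p (f (fst z *\<^sub>R snd z)) * (grad f (fst z *\<^sub>R snd z) \<bullet> snd z) * V (snd z))"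
      by (intro continuous_intros c2 c3 c4)
    then have "continuous_on (U \<times> B) (\<lambda>z::real \<times> 'a. Dp p (f (fst z *\<^sub>R snd z)) * (grad f (fst z *\<^sub>R snd z) \<bullet> snd z) * V (snd z))"
      by (rule continuous_on_subset) auto
    then show ?thesis by (simp add: Fx_def split_beta)
  qed
  have cF: "continuous_on UNIV (F t)" for t
  proof -
    have "continuous_on UNIV (\<lambda>x. f (t *\<^sub>R x))"
      by (rule continuous_on_compose2[OF cf]) (auto intro!: continuous_intros)
    then show ?thesis unfolding F_def
      by (intro continuous_intros continuous_on_powr' cV) (use p in auto)
  qed
  have dF: "((\<lambda>t. F t x) has_field_derivative Fx t x) (at t within U)" for t x
  proof -
    have h1: "((\<lambda>t. t *\<^sub>R x) has_derivative (\<lambda>h. h *\<^sub>R x)) (at t)"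
      by (auto intro!: derivative_eq_intros)
    have "((\<lambda>t. f (t *\<^sub>R x)) has_derivative (\<lambda>h. grad f (t *\<^sub>R x) \<bullet> (h *\<^sub>R x))) (at t)"
      by (rule has_derivative_compose[OF h1 fd])
    then have h2: "((\<lambda>t. f (t *\<^sub>R x)) has_real_derivative (grad f (t *\<^sub>R x) \<bullet> x)) (at t)"
      unfolding has_field_derivative_def by (simp add: mult.commute[of _ "grad f (t *\<^sub>R x) \<bullet> x"])
    have "((\<lambda>t. \<bar>f (t *\<^sub>R x)\<bar> powr p) has_real_derivative Dp p (f (t *\<^sub>R x)) * (grad f (t *\<^sub>R x) \<bullet> x)) (at t)"
      by (rule DERIV_chain2[OF absp_deriv[OF p] h2])
    then have "((\<lambda>t. F t x) has_real_derivative Fx t x) (at t)"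
      unfolding F_def Fx_def by (rule DERIV_cmult_right)
    then show ?thesis by (rule has_field_derivative_at_within)
  qed
  have "((\<lambda>t. integral B (F t)) has_field_derivative integral B (Fx 1)) (at 1 within U)"
    unfolding B_def
    by (rule leibniz_rule_field_derivative[OF dF _ cFx[unfolded B_def]])
       (auto simp: U_def intro!: integrable_continuous continuous_on_subset[OF cF])
  then have der: "((\<lambda>t. integral B (F t)) has_field_derivative integral B (Fx 1)) (at 1)"
  proof -
    have "at (1::real) within U = at 1" by (rule at_within_interior) (simp add: U_def)
    then show ?thesis using \<open>((\<lambda>t. integral B (F t)) has_field_derivative integral B (Fx 1)) (at 1 within U)\<close> by simp
  qed
  have e1: "integral B (F t) = integral UNIV (\<lambda>x. \<bar>f (t *\<^sub>R x)\<bar> powr p * W x)" if "t \<in> U" for t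
  proof -
    have "integral UNIV (F t) = integral B (F t)"
      by (rule integral_UNIV_box) (use big[OF that] p in \<open>auto simp: B_def F_def intro!: integrable_continuous continuous_on_subset[OF cF]\<close>)
    moreover have "F t = (\<lambda>x. \<bar>f (t *\<^sub>R x)\<bar> powr p * W x)" using VW[OF that] by (auto simp: F_def)
    ultimately show ?thesis by simp
  qed
  have e2: "integral B (Fx 1) = integral UNIV (\<lambda>x. Dp p (f x) * (grad f x \<bullet> x) * W x)"
  proof -
    have a1: "continuous_on UNIV (\<lambda>x. f (1 *\<^sub>R x))"
      by (rule continuous_on_compose2[OF cf]) (auto intro!: continuous_intros)
    have a2: "continuous_on UNIV (\<lambda>x. Dp p (f (1 *\<^sub>R x)))"
      by (rule continuous_on_compose2[OF cDp a1]) auto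
    have a3: "continuous_on UNIV (\<lambda>x. grad f (1 *\<^sub>R x))"
      by (rule continuous_on_compose2[OF gc]) (auto intro!: continuous_intros)
    have cFx1: "continuous_on UNIV (Fx 1)"
      unfolding Fx_def by (intro continuous_intros a2 a3 cV)
    have "integral UNIV (Fx 1) = integral B (Fx 1)"
      by (rule integral_UNIV_box) (use big[of 1] in \<open>auto simp: B_def Fx_def U_def intro!: integrable_continuous continuous_on_subset[OF cFx1]\<close>)
    moreover have "Fx 1 = (\<lambda>x. Dp p (f x) * (grad f x \<bullet> x) * W x)" using VW' by (auto simp: Fx_def)
    ultimately show ?thesis by simp
  qed
  show ?thesis
    by (rule has_field_derivative_transform_within_open[OF der[unfolded e2], of "{1/2<..<2}"])
       (auto simp: e1 U_def)
qed



definition good :: "'a::euclidean_space set \<Rightarrow> ('a \<Rightarrow> real) \<Rightarrow> bool" where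
  "good K f \<longleftrightarrow> compact K \<and> 0 \<notin> K \<and> (\<forall>x. x \<notin> K \<longrightarrow> f x = 0)
     \<and> (\<forall>x. (f has_derivative (\<lambda>v. grad f x \<bullet> v)) (at x))
     \<and> continuous_on UNIV (grad f) \<and> (\<forall>x. x \<notin> K \<longrightarrow> grad f x = 0)"

lemma good_cont: "good K f \<Longrightarrow> continuous_on UNIV f"
  unfolding good_def
  by (meson continuous_on_eq_continuous_within has_derivative_continuous)

lemma good_int_W:
  fixes f :: "'a::euclidean_space \<Rightarrow> real"
  assumes g: "good K f" and p: "p > 0" and W: "continuous_on (-{0}) W"
  shows "integrable lborel (\<lambda>x. \<bar>f x\<bar> powr p * W x)"
proof (rule integrable_cpt[of K])
  show "compact K" using g by (simp add: good_def)
  have "continuous_on K W" by (rule continuous_on_subset[OF W]) (use g in \<open>auto simp: good_def\<close>)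
  moreover have "continuous_on K f" using good_cont[OF g] by (rule continuous_on_subset) auto
  ultimately show "continuous_on K (\<lambda>x. \<bar>f x\<bar> powr p * W x)"
    by (intro continuous_intros continuous_on_powr') (use p in auto)
  show "\<And>x. x \<notin> K \<Longrightarrow> \<bar>f x\<bar> powr p * W x = 0" using g by (auto simp: good_def)
qed

lemma euler_good:
  fixes f :: "'a::euclidean_space \<Rightarrow> real"
  assumes g: "good K f" and p: "p > 1" and W: "continuous_on (-{0}) W"
  shows "((\<lambda>t. integral UNIV (\<lambda>x. \<bar>f (t *\<^sub>R x)\<bar> powr p * W x)) has_field_derivative
           integral UNIV (\<lambda>x. Dp p (f x) * (grad f x \<bullet> x) * W x)) (at 1)"
  using g by (intro euler_identity[OF _ _ _ _ _ _ p W, of K]) (auto simp: good_def)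

lemma power_identity:
  fixes f :: "'a::euclidean_space \<Rightarrow> real"
  assumes g: "good K f" and p: "p > 1"
  shows "integral UNIV (\<lambda>x. Dp p (f x) * (grad f x \<bullet> x) * norm x powr (-\<beta>))
     = (\<beta> - real DIM('a)) * integral UNIV (\<lambda>x. \<bar>f x\<bar> powr p * norm x powr (-\<beta>))"
proof -
  define W where "W x = norm x powr (-\<beta>)" for x :: 'a
  have W: "continuous_on (-{0}) W" unfolding W_def by (intro continuous_intros) auto
  define C where "C = integral UNIV (\<lambda>x. \<bar>f x\<bar> powr p * W x)"
  have intC: "(\<lambda>x. \<bar>f x\<bar> powr p * W x) integrable_on UNIV"
    using integrable_on_lborel[OF good_int_W[OF g _ W]] p by simp
  have psi: "integral UNIV (\<lambda>x. \<bar>f (t *\<^sub>R x)\<bar> powr p * W x) = t powr (\<beta> - real DIM('a)) * C"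
    if t: "t > 0" for t
  proof -
    define gt where "gt y = \<bar>f y\<bar> powr p * W ((1/t) *\<^sub>R y)" for y
    have gteq: "gt = (\<lambda>y. t powr \<beta> * (\<bar>f y\<bar> powr p * W y))"
      using t by (auto simp: fun_eq_iff gt_def W_def powr_divide powr_minus field_simps)
    have "integral UNIV (\<lambda>x. gt (t *\<^sub>R x)) = integral UNIV gt / t ^ DIM('a)"
    proof (rule scale_integral[OF _ _ _ t])
      show "gt integrable_on UNIV" unfolding gteq using integrable_on_cmult_left[OF intC, of "t powr \<beta>"] by simp
      show "bounded K" using g by (auto simp: good_def compact_imp_bounded)
      show "\<And>x. x \<notin> K \<Longrightarrow> gt x = 0" using g by (auto simp: good_def gt_def)
    qed
    moreover have "(\<lambda>x. gt (t *\<^sub>R x)) = (\<lambda>x. \<bar>f (t *\<^sub>R x)\<bar> powr p * W x)"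
      using t by (auto simp: gt_def)
    moreover have "integral UNIV gt = t powr \<beta> * C"
      unfolding gteq C_def using integral_mult[OF intC, of "t powr \<beta>"] by simp
    ultimately show ?thesis using t
      by (simp add: powr_diff powr_realpow)
  qed
  have d1: "((\<lambda>t. t powr (\<beta> - real DIM('a)) * C) has_field_derivative (\<beta> - real DIM('a)) * C) (at 1)"
    using DERIV_cmult_right[OF has_real_derivative_powr[of 1 "\<beta> - real DIM('a)"], of C] by simp
  have d2: "((\<lambda>t. integral UNIV (\<lambda>x. \<bar>f (t *\<^sub>R x)\<bar> powr p * W x)) has_field_derivative (\<beta> - real DIM('a)) * C) (at 1)"
    by (rule has_field_derivative_transform_within_open[OF d1, of "{0<..}"]) (auto simp: psi)
  show ?thesis
    using DERIV_unique[OF euler_good[OF g p W] d2] by (simp add: W_def C_def)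
qed

lemma log_identity:
  fixes f :: "'a::euclidean_space \<Rightarrow> real"
  assumes g: "good K f" and p: "p > 1"
  shows "integral UNIV (\<lambda>x. Dp p (f x) * (grad f x \<bullet> x) * (norm x powr (- real DIM('a)) * ln (norm x)))
     = - integral UNIV (\<lambda>x. \<bar>f x\<bar> powr p * norm x powr (- real DIM('a)))"
proof -
  define n where "n = real DIM('a)"
  define W where "W x = norm x powr (-n) * ln (norm x)" for x :: 'a
  define W0 where "W0 x = norm x powr (-n)" for x :: 'a
  have W: "continuous_on (-{0}) W" unfolding W_def by (intro continuous_intros) auto
  have W0: "continuous_on (-{0}) W0" unfolding W0_def by (intro continuous_intros) auto
  define C1 where "C1 = integral UNIV (\<lambda>x. \<bar>f x\<bar> powr p * W x)"
  define C0 where "C0 = integral UNIV (\<lambda>x. \<bar>f x\<bar> powr p * W0 x)"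
  have int1: "(\<lambda>x. \<bar>f x\<bar> powr p * W x) integrable_on UNIV"
    using integrable_on_lborel[OF good_int_W[OF g _ W]] p by simp
  have int0: "(\<lambda>x. \<bar>f x\<bar> powr p * W0 x) integrable_on UNIV"
    using integrable_on_lborel[OF good_int_W[OF g _ W0]] p by simp
  have psi: "integral UNIV (\<lambda>x. \<bar>f (t *\<^sub>R x)\<bar> powr p * W x) = C1 - ln t * C0"
    if t: "t > 0" for t
  proof -
    define gt where "gt y = \<bar>f y\<bar> powr p * W ((1/t) *\<^sub>R y)" for y
    have gteq: "gt = (\<lambda>y. t powr n * (\<bar>f y\<bar> powr p * W y) - t powr n * ln t * (\<bar>f y\<bar> powr p * W0 y))"
    proof
      fix y
      show "gt y = t powr n * (\<bar>f y\<bar> powr p * W y) - t powr n * ln t * (\<bar>f y\<bar> powr p * W0 y)"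
      proof (cases "y = 0")
        case True then show ?thesis by (simp add: gt_def W_def W0_def)
      next
        case False
        have l: "ln (norm y / t) = ln (norm y) - ln t" using t False by (simp add: ln_div)
        have q: "(norm y / t) powr (-n) = t powr n * norm y powr (-n)"
          using t by (simp add: powr_divide powr_minus field_simps)
        have "W ((1/t) *\<^sub>R y) = t powr n * W y - t powr n * ln t * W0 y"
          using t unfolding W_def W0_def by (simp add: l q algebra_simps)
        then show ?thesis unfolding gt_def by (simp only:) (simp add: algebra_simps)
      qed
    qed
    have intg: "gt integrable_on UNIV"
      unfolding gteq
      using integrable_on_cmult_left[OF int1, of "t powr n"] integrable_on_cmult_left[OF int0, of "t powr n * ln t"]
      by (intro integrable_diff) simp_all
    have "integral UNIV (\<lambda>x. gt (t *\<^sub>R x)) = integral UNIV gt / t ^ DIM('a)"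
    proof (rule scale_integral[OF intg _ _ t])
      show "bounded K" using g by (auto simp: good_def compact_imp_bounded)
      show "\<And>x. x \<notin> K \<Longrightarrow> gt x = 0" using g by (auto simp: good_def gt_def)
    qed
    moreover have "(\<lambda>x. gt (t *\<^sub>R x)) = (\<lambda>x. \<bar>f (t *\<^sub>R x)\<bar> powr p * W x)"
      using t by (auto simp: gt_def)
    moreover have "integral UNIV gt = t powr n * C1 - t powr n * ln t * C0"
      unfolding gteq C1_def C0_def
      using integral_mult[OF int1, of "t powr n"] integral_mult[OF int0, of "t powr n * ln t"]
        integrable_on_cmult_left[OF int1, of "t powr n"] integrable_on_cmult_left[OF int0, of "t powr n * ln t"]
      by (simp add: integral_diff)
    ultimately have "integral UNIV (\<lambda>x. \<bar>f (t *\<^sub>R x)\<bar> powr p * W x)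
        = (t powr n * C1 - t powr n * ln t * C0) / t ^ DIM('a)" by simp
    also have "\<dots> = C1 - ln t * C0"
      using t by (simp add: n_def powr_realpow field_simps)
    finally show ?thesis .
  qed
  have d1: "((\<lambda>t. C1 - ln t * C0) has_field_derivative - C0) (at 1)"
    by (auto intro!: derivative_eq_intros)
  have d2: "((\<lambda>t. integral UNIV (\<lambda>x. \<bar>f (t *\<^sub>R x)\<bar> powr p * W x)) has_field_derivative - C0) (at 1)"
    by (rule has_field_derivative_transform_within_open[OF d1, of "{0<..}"]) (auto simp: psi)
  show ?thesis
    using DERIV_unique[OF euler_good[OF g p W] d2] by (simp add: W_def C0_def W0_def n_def)
qed



lemma hardy_alg:
  fixes A G \<kappa> p :: real
  assumes "\<kappa> * A \<le> p * (A powr ((p-1)/p) * G powr (1/p))" "A > 0" "p > 1"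
  shows "\<kappa> * A powr (1/p) \<le> p * G powr (1/p)"
proof -
  have "A = A powr ((p-1)/p) * A powr (1/p)"
    using assms by (simp add: powr_add[symmetric] add_divide_distrib[symmetric])
  then have "A powr ((p-1)/p) * (\<kappa> * A powr (1/p)) \<le> A powr ((p-1)/p) * (p * G powr (1/p))"
    using assms(1) by (simp add: algebra_simps)
  moreover have "A powr ((p-1)/p) > 0" using assms by simp
  ultimately show ?thesis by (simp add: mult_le_cancel_left_pos)
qed

lemma good_contK:
  assumes "good K f"
  shows "continuous_on K f" "continuous_on K (grad f)" "compact K" "0 \<notin> K"
    "\<And>x. x \<notin> K \<Longrightarrow> f x = 0" "\<And>x. x \<notin> K \<Longrightarrow> grad f x = 0"
  using assms good_cont[OF assms] by (auto simp: good_def intro: continuous_on_subset)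

lemma norm_powr_contK: "0 \<notin> K \<Longrightarrow> continuous_on K (\<lambda>x::'a::real_normed_vector. norm x powr e)"
  by (intro continuous_intros) auto

lemma hardy_core:
  fixes f :: "'a::euclidean_space \<Rightarrow> real" and \<omega> :: "'a \<Rightarrow> real" and a p :: real
  assumes g: "good K f" and p: "p > 1" and \<omega>: "continuous_on (-{0}) \<omega>"
  defines "A \<equiv> \<integral>x. \<bar>norm x powr (a-1) * f x\<bar> powr p \<partial>lborel"
      and "G \<equiv> \<integral>x. \<bar>norm x powr a * \<omega> x * norm (grad f x)\<bar> powr p \<partial>lborel"
  shows "\<bar>integral UNIV (\<lambda>x. Dp p (f x) * (grad f x \<bullet> x) * (norm x powr ((a-1)*p) * \<omega> x))\<bar>
           \<le> p * (A powr ((p-1)/p) * G powr (1/p))"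
    and "integral UNIV (\<lambda>x. \<bar>f x\<bar> powr p * (norm x powr ((a-1)*p) * \<omega> x)) =
         (\<integral>x. \<bar>f x\<bar> powr p * (norm x powr ((a-1)*p) * \<omega> x) \<partial>lborel)"
    and "A = integral UNIV (\<lambda>x. \<bar>f x\<bar> powr p * norm x powr ((a-1)*p))"
proof -
  note gc = good_contK[OF g]
  have \<omega>K: "continuous_on K \<omega>" by (rule continuous_on_subset[OF \<omega>]) (use gc in auto)
  have DpK: "continuous_on K (\<lambda>x. Dp p (f x))"
    by (rule continuous_on_compose2[OF Dp_cont[OF p] gc(1)]) auto
  have nK: "continuous_on K (\<lambda>x. norm x powr e)" for e using norm_powr_contK[OF gc(4)] .
  define h where "h x = Dp p (f x) * (grad f x \<bullet> x) * (norm x powr ((a-1)*p) * \<omega> x)" for x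
  have ih: "integrable lborel h"
    by (rule integrable_cpt[OF gc(3)]) (use gc in \<open>auto simp: h_def intro!: continuous_intros DpK nK \<omega>K\<close>)
  define F' where "F' x = \<bar>norm x powr (a-1) * f x\<bar> powr (p-1)" for x
  define G' where "G' x = \<bar>norm x powr a * \<omega> x * norm (grad f x)\<bar>" for x
  have "continuous_on K (\<lambda>x. \<bar>norm x powr (a-1) * f x\<bar>)" by (intro continuous_intros nK gc(1))
  then have cF': "continuous_on K F'" unfolding F'_def
    by (rule continuous_on_powr'[OF _ continuous_on_const]) (use p in auto)
  have cG': "continuous_on K G'" unfolding G'_def
    by (intro continuous_intros nK gc(2) \<omega>K)
  have iF'P: "integrable lborel (\<lambda>x. F' x powr (p/(p-1)))"
    by (rule integrable_cpt[OF gc(3)], rule continuous_on_powr'[OF cF' continuous_on_const]) (use gc p in \<open>auto simp: F'_def\<close>)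
  have iG'p: "integrable lborel (\<lambda>x. G' x powr p)"
    by (rule integrable_cpt[OF gc(3)], rule continuous_on_powr'[OF cG' continuous_on_const]) (use gc p in \<open>auto simp: G'_def\<close>)
  have iFG: "integrable lborel (\<lambda>x. F' x * G' x)"
    by (rule integrable_cpt[OF gc(3)], intro continuous_intros cF' cG') (use gc p in \<open>auto simp: G'_def F'_def\<close>)
  have FP: "F' x powr (p/(p-1)) = \<bar>norm x powr (a-1) * f x\<bar> powr p" for x
    using p by (simp add: F'_def powr_powr)
  have pw: "\<bar>h x\<bar> \<le> p * (F' x * G' x)" for x
  proof (cases "x \<in> K")
    case False
    then show ?thesis using gc p by (simp add: h_def F'_def G'_def)
  next
    case True
    then have x0: "x \<noteq> 0" using gc by auto
    have ex: "norm x * norm x powr ((a-1)*p) = norm x powr ((a-1)*(p-1)) * norm x powr a"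
    proof -
      have "norm x powr ((a-1)*(p-1)) * norm x powr a = norm x powr ((a-1)*(p-1) + a)"
        by (simp add: powr_add)
      also have "\<dots> = norm x powr (1 + (a-1)*p)"
        by (rule arg_cong[where f="\<lambda>e. norm x powr e"]) (simp add: algebra_simps)
      also have "\<dots> = norm x * norm x powr ((a-1)*p)"
        using x0 by (simp add: powr_add)
      finally show ?thesis by simp
    qed
    have "\<bar>h x\<bar> = p * \<bar>f x\<bar> powr (p-1) * \<bar>grad f x \<bullet> x\<bar> * (norm x powr ((a-1)*p) * \<bar>\<omega> x\<bar>)"
      using p by (simp add: h_def abs_mult abs_Dp)
    also have "\<dots> \<le> p * \<bar>f x\<bar> powr (p-1) * (norm (grad f x) * norm x) * (norm x powr ((a-1)*p) * \<bar>\<omega> x\<bar>)"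
      using p by (intro mult_right_mono mult_left_mono Cauchy_Schwarz_ineq2) auto
    also have "\<dots> = p * (\<bar>f x\<bar> powr (p-1) * norm (grad f x) * \<bar>\<omega> x\<bar>) * (norm x * norm x powr ((a-1)*p))"
      by (simp add: algebra_simps)
    also have "\<dots> = p * (F' x * G' x)"
      unfolding ex F'_def G'_def
      by (simp add: abs_mult powr_mult powr_powr algebra_simps)
    finally show ?thesis .
  qed
  have "\<bar>integral UNIV h\<bar> = \<bar>\<integral>x. h x \<partial>lborel\<bar>" using integral_lborel[OF ih] by simp
  also have "\<dots> \<le> (\<integral>x. p * (F' x * G' x) \<partial>lborel)"
    by (rule integral_abs_bound_integral[OF ih]) (use iFG pw in auto)
  also have "\<dots> = p * (\<integral>x. F' x * G' x \<partial>lborel)" by simp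
  also have "\<dots> \<le> p * ((\<integral>x. F' x powr (p/(p-1)) \<partial>lborel) powr (1/(p/(p-1))) * (\<integral>x. G' x powr p \<partial>lborel) powr (1/p))"
    using p by (intro mult_left_mono holder iF'P iG'p iFG) (auto simp: F'_def G'_def field_simps)
  also have "\<dots> = p * (A powr ((p-1)/p) * G powr (1/p))"
    by (simp add: FP A_def G_def G'_def)
  finally have hb: "\<bar>integral UNIV h\<bar> \<le> p * (A powr ((p-1)/p) * G powr (1/p))" .
  have hE: "h = (\<lambda>x. Dp p (f x) * (grad f x \<bullet> x) * (norm x powr ((a-1)*p) * \<omega> x))"
    by (rule ext) (simp add: h_def)
  show "\<bar>integral UNIV (\<lambda>x. Dp p (f x) * (grad f x \<bullet> x) * (norm x powr ((a-1)*p) * \<omega> x))\<bar>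
           \<le> p * (A powr ((p-1)/p) * G powr (1/p))" using hb unfolding hE .
  have i2: "integrable lborel (\<lambda>x. \<bar>f x\<bar> powr p * (norm x powr ((a-1)*p) * \<omega> x))"
    by (rule integrable_cpt[OF gc(3)]) (use gc p in \<open>auto intro!: continuous_intros continuous_on_powr' nK \<omega>K\<close>)
  show "integral UNIV (\<lambda>x. \<bar>f x\<bar> powr p * (norm x powr ((a-1)*p) * \<omega> x)) =
         (\<integral>x. \<bar>f x\<bar> powr p * (norm x powr ((a-1)*p) * \<omega> x) \<partial>lborel)"
    using integral_lborel[OF i2] by simp
  have i3: "integrable lborel (\<lambda>x. \<bar>f x\<bar> powr p * norm x powr ((a-1)*p))"
    by (rule integrable_cpt[OF gc(3)]) (use gc p in \<open>auto intro!: continuous_intros continuous_on_powr' nK\<close>)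
  have "A = (\<integral>x. \<bar>f x\<bar> powr p * norm x powr ((a-1)*p) \<partial>lborel)"
    unfolding A_def by (simp add: abs_mult powr_mult powr_powr mult.commute)
  then show "A = integral UNIV (\<lambda>x. \<bar>f x\<bar> powr p * norm x powr ((a-1)*p))"
    using integral_lborel[OF i3] by simp
qed



lemma cont_Lp:
  assumes g: "good K f" and s: "s > 0"
  shows "continuous_on K (\<lambda>x. \<bar>norm x powr e * f x\<bar> powr s)"
proof -
  note gc = good_contK[OF g]
  have "continuous_on K (\<lambda>x. \<bar>norm x powr e * f x\<bar>)" by (intro continuous_intros norm_powr_contK gc(1) gc(4))
  then show ?thesis by (rule continuous_on_powr'[OF _ continuous_on_const]) (use s in auto)
qed

lemma int_Lp:
  assumes g: "good K f" and s: "s > 0"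
  shows "integrable lborel (\<lambda>x. \<bar>norm x powr e * f x\<bar> powr s)"
  using good_contK[OF g] s by (intro integrable_cpt[OF _ cont_Lp[OF g s]]) auto

lemma int_zero_AE:
  assumes g: "good K f" and s: "s > 0" and z: "(\<integral>x. \<bar>norm x powr e * f x\<bar> powr s \<partial>lborel) = 0"
  shows "AE x in lborel. f x = 0"
proof -
  have "AE x in lborel. \<bar>norm x powr e * f x\<bar> powr s = 0"
    using integral_nonneg_eq_0_iff_AE[OF int_Lp[OF g s, of e]] z by auto
  then show ?thesis using AE_lborel_singleton[of 0]
    by eventually_elim auto
qed

lemma AE_int_zero:
  assumes "AE x in lborel. f x = 0" "s > 0"
  shows "(\<integral>x. \<bar>norm x powr e * f x\<bar> powr s \<partial>lborel) = 0"
  using assms by (intro integral_eq_zero_AE) (auto elim!: eventually_mono)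

lemma int_nonneg_Lp: "(\<integral>x. \<bar>g x\<bar> powr s \<partial>lborel) \<ge> (0::real)" for g :: "'a::euclidean_space \<Rightarrow> real"
  by (rule integral_nonneg_AE) auto

lemma hardy_pow:
  fixes f :: "'a::euclidean_space \<Rightarrow> real"
  assumes g: "good K f" and p: "p > 1" and n: "real DIM('a) \<noteq> p * (1 - a)"
    and A: "(\<integral>x. \<bar>norm x powr (a-1) * f x\<bar> powr p \<partial>lborel) > 0"
  shows "(\<integral>x. \<bar>norm x powr (a-1) * f x\<bar> powr p \<partial>lborel) powr (1/p)
     \<le> \<bar>p / (real DIM('a) - p * (1 - a))\<bar> * (\<integral>x. \<bar>norm x powr a * norm (grad f x)\<bar> powr p \<partial>lborel) powr (1/p)"
proof -
  define A where "A = (\<integral>x. \<bar>norm x powr (a-1) * f x\<bar> powr p \<partial>lborel)"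
  define G where "G = (\<integral>x. \<bar>norm x powr a * norm (grad f x)\<bar> powr p \<partial>lborel)"
  have \<omega>: "continuous_on (-{0}) (\<lambda>x::'a. 1::real)" by simp
  note hc = hardy_core[OF g p \<omega>, of a]
  have ex: "-(p * (1 - a)) = (a - 1) * p" by (simp add: algebra_simps)
  have pid: "integral UNIV (\<lambda>x. Dp p (f x) * (grad f x \<bullet> x) * norm x powr ((a-1)*p))
     = (p * (1 - a) - real DIM('a)) * integral UNIV (\<lambda>x. \<bar>f x\<bar> powr p * norm x powr ((a-1)*p))"
    using power_identity[OF g p, of "p * (1 - a)"] unfolding ex .
  have AI: "A = integral UNIV (\<lambda>x. \<bar>f x\<bar> powr p * norm x powr ((a-1)*p))"
    unfolding A_def by (rule hc(3))
  have h1: "\<bar>integral UNIV (\<lambda>x. Dp p (f x) * (grad f x \<bullet> x) * norm x powr ((a-1)*p))\<bar>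
      \<le> p * (A powr ((p-1)/p) * G powr (1/p))"
    using hc(1) unfolding A_def G_def mult_1_right .
  have A0: "A > 0" using A by (simp add: A_def)
  have "\<bar>p * (1 - a) - real DIM('a)\<bar> * A \<le> p * (A powr ((p-1)/p) * G powr (1/p))"
    using h1 unfolding pid AI[symmetric] using A0 by (simp add: abs_mult)
  then have "\<bar>p * (1 - a) - real DIM('a)\<bar> * A powr (1/p) \<le> p * G powr (1/p)"
    by (rule hardy_alg) (use A p in \<open>auto simp: A_def\<close>)
  moreover have "\<bar>p * (1 - a) - real DIM('a)\<bar> > 0" using n by simp
  ultimately have "A powr (1/p) \<le> p * G powr (1/p) / \<bar>p * (1 - a) - real DIM('a)\<bar>"
    by (simp add: field_simps)
  also have "\<dots> = \<bar>p / (real DIM('a) - p * (1 - a))\<bar> * G powr (1/p)"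
    using p by (simp add: abs_minus_commute)
  finally show ?thesis by (simp add: A_def G_def)
qed

lemma hardy_log:
  fixes f :: "'a::euclidean_space \<Rightarrow> real"
  assumes g: "good K f" and p: "p > 1" and n: "real DIM('a) = p * (1 - a)"
    and A: "(\<integral>x. \<bar>norm x powr (a-1) * f x\<bar> powr p \<partial>lborel) > 0"
  shows "(\<integral>x. \<bar>norm x powr (a-1) * f x\<bar> powr p \<partial>lborel) powr (1/p)
     \<le> p * (\<integral>x. \<bar>norm x powr a * ln (norm x) * norm (grad f x)\<bar> powr p \<partial>lborel) powr (1/p)"
proof -
  define A where "A = (\<integral>x. \<bar>norm x powr (a-1) * f x\<bar> powr p \<partial>lborel)"
  define G where "G = (\<integral>x. \<bar>norm x powr a * ln (norm x) * norm (grad f x)\<bar> powr p \<partial>lborel)"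
  have \<omega>: "continuous_on (-{0}) (\<lambda>x::'a. ln (norm x))" by (intro continuous_intros) auto
  note hc = hardy_core[OF g p \<omega>, of a]
  have ex: "(a - 1) * p = - real DIM('a)" using n by (simp add: algebra_simps)
  have AI: "A = integral UNIV (\<lambda>x. \<bar>f x\<bar> powr p * norm x powr (- real DIM('a)))"
    unfolding A_def using hc(3) unfolding ex .
  have h1: "\<bar>integral UNIV (\<lambda>x. Dp p (f x) * (grad f x \<bullet> x) * (norm x powr (- real DIM('a)) * ln (norm x)))\<bar>
      \<le> p * (A powr ((p-1)/p) * G powr (1/p))"
    using hc(1) unfolding A_def G_def ex .
  have A0: "A > 0" using A by (simp add: A_def)
  have "1 * A \<le> p * (A powr ((p-1)/p) * G powr (1/p))"
    using h1 unfolding log_identity[OF g p] AI[symmetric] using A0 by simp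
  then have "1 * A powr (1/p) \<le> p * G powr (1/p)"
    by (rule hardy_alg) (use A p in \<open>auto simp: A_def\<close>)
  then show ?thesis by (simp add: A_def G_def)
qed



lemma nf: "\<bar>norm (x::'a::real_normed_vector) powr ee * (yy::real)\<bar> powr ss = norm x powr (ee * ss) * \<bar>yy\<bar> powr ss"
  by (simp add: abs_mult powr_mult powr_powr)

lemma interp:
  fixes f :: "'a::euclidean_space \<Rightarrow> real"
  assumes g: "good K f" and p: "p > 1" and q: "q > 1" and r: "r > 0"
    and d0: "0 \<le> \<delta>" and d1: "\<delta> \<le> 1" and eq: "\<delta> * r / p + (1 - \<delta>) * r / q = 1"
    and c: "c = \<delta> * (a - 1) + b * (1 - \<delta>)"
    and A: "(\<integral>x. \<bar>norm x powr (a-1) * f x\<bar> powr p \<partial>lborel) > 0"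
    and B: "(\<integral>x. \<bar>norm x powr b * f x\<bar> powr q \<partial>lborel) > 0"
  shows "(\<integral>x. \<bar>norm x powr c * f x\<bar> powr r \<partial>lborel) powr (1/r)
     \<le> ((\<integral>x. \<bar>norm x powr (a-1) * f x\<bar> powr p \<partial>lborel) powr (1/p)) powr \<delta>
       * ((\<integral>x. \<bar>norm x powr b * f x\<bar> powr q \<partial>lborel) powr (1/q)) powr (1 - \<delta>)"
proof -
  define A where "A = (\<integral>x. \<bar>norm x powr (a-1) * f x\<bar> powr p \<partial>lborel)"
  define B where "B = (\<integral>x. \<bar>norm x powr b * f x\<bar> powr q \<partial>lborel)"
  define L where "L = (\<integral>x. \<bar>norm x powr c * f x\<bar> powr r \<partial>lborel)"
  have A0: "A > 0" and B0: "B > 0" using A B by (auto simp: A_def B_def)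
  have L0: "L \<ge> 0" unfolding L_def by (rule int_nonneg_Lp)
  consider "\<delta> = 0" | "\<delta> = 1" | "0 < \<delta>" "\<delta> < 1" using d0 d1 by linarith
  then have "L powr (1/r) \<le> (A powr (1/p)) powr \<delta> * (B powr (1/q)) powr (1 - \<delta>)"
  proof cases
    case 1
    then have "r = q" using eq q by simp
    moreover have "c = b" using c 1 by simp
    ultimately have "L = B" by (simp add: L_def B_def)
    then show ?thesis using 1 A0 B0 \<open>r = q\<close> by simp
  next
    case 2
    then have "r = p" using eq p by simp
    moreover have "c = a - 1" using c 2 by simp
    ultimately have "L = A" by (simp add: L_def A_def)
    then show ?thesis using 2 A0 B0 \<open>r = p\<close> by simp
  next
    case 3
    define P where "P = p / (\<delta> * r)"
    define Q where "Q = q / ((1 - \<delta>) * r)"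
    have iP: "1/P = \<delta> * r / p" and iQ: "1/Q = (1 - \<delta>) * r / q" by (simp_all add: P_def Q_def)
    have iPpos: "\<delta> * r / p > 0" "(1 - \<delta>) * r / q > 0" using 3 p q r by auto
    have P1: "P > 1"
    proof -
      have "1/P < 1" "1/P > 0" using iP iPpos eq by linarith+
      then show ?thesis by (simp add: field_simps split: if_splits)
    qed
    have Q1: "Q > 1"
    proof -
      have "1/Q < 1" "1/Q > 0" using iQ iPpos eq by linarith+
      then show ?thesis by (simp add: field_simps split: if_splits)
    qed
    define F where "F x = \<bar>norm x powr (a-1) * f x\<bar> powr (\<delta> * r)" for x
    define G where "G x = \<bar>norm x powr b * f x\<bar> powr ((1 - \<delta>) * r)" for x
    have FP: "F x powr P = \<bar>norm x powr (a-1) * f x\<bar> powr p" for x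
      using 3 r by (simp add: F_def powr_powr P_def)
    have GQ: "G x powr Q = \<bar>norm x powr b * f x\<bar> powr q" for x
      using 3 r by (simp add: G_def powr_powr Q_def)
    have FG: "F x * G x = \<bar>norm x powr c * f x\<bar> powr r" for x
    proof -
      have "F x * G x = (norm x powr ((a-1)*(\<delta>*r)) * norm x powr (b*((1-\<delta>)*r)))
          * (\<bar>f x\<bar> powr (\<delta>*r) * \<bar>f x\<bar> powr ((1-\<delta>)*r))"
        by (simp add: F_def G_def nf)
      also have "\<dots> = norm x powr ((a-1)*(\<delta>*r) + b*((1-\<delta>)*r)) * \<bar>f x\<bar> powr (\<delta>*r + (1-\<delta>)*r)"
        by (simp add: powr_add)
      also have "(a-1)*(\<delta>*r) + b*((1-\<delta>)*r) = c * r" unfolding c by (simp add: algebra_simps)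
      also have "\<delta>*r + (1-\<delta>)*r = r" by (simp add: algebra_simps)
      finally show ?thesis by (simp add: nf)
    qed
    have "L \<le> A powr (1/P) * B powr (1/Q)"
    proof -
      have "(\<integral>x. F x * G x \<partial>lborel) \<le> (\<integral>x. F x powr P \<partial>lborel) powr (1/P) * (\<integral>x. G x powr Q \<partial>lborel) powr (1/Q)"
      proof (rule holder[OF P1 Q1])
        show "1/P + 1/Q = 1" using iP iQ eq by simp
        show "integrable lborel (\<lambda>x. F x powr P)" unfolding FP using int_Lp[OF g] p by simp
        show "integrable lborel (\<lambda>x. G x powr Q)" unfolding GQ using int_Lp[OF g] q by simp
        show "integrable lborel (\<lambda>x. F x * G x)" unfolding FG using int_Lp[OF g] r by simp
      qed (auto simp: F_def G_def)
      then show ?thesis unfolding FP GQ FG by (simp add: A_def B_def L_def)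
    qed
    then have "L powr (1/r) \<le> (A powr (1/P) * B powr (1/Q)) powr (1/r)"
      using L0 r by (intro powr_mono2) auto
    also have "\<dots> = (A powr (1/p)) powr \<delta> * (B powr (1/q)) powr (1 - \<delta>)"
    proof -
      have e1: "\<delta> * r / p * (1/r) = 1/p * \<delta>" using r by simp
      have e2: "(1 - \<delta>) * r / q * (1/r) = 1/q * (1 - \<delta>)" using r by simp
      show ?thesis using A0 B0 r unfolding iP iQ powr_powr by (simp add: powr_mult powr_powr e1 e2)
    qed
    finally show ?thesis .
  qed
  then show ?thesis by (simp add: A_def B_def L_def)
qed



theorem theorem1p2:
  fixes f :: "'a::euclidean_space \<Rightarrow> real"
    and p q r \<delta> a b c :: real
  assumes "1 < p" and "1 < q" and "0 < r" and "p + q \<ge> r"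
    and "0 \<le> \<delta>" and "\<delta> \<le> 1" and "(r - q) / r \<le> \<delta>" and "\<delta> \<le> p / r"
    and "\<delta> * r / p + (1 - \<delta>) * r / q = 1"
    and "c = \<delta> * (a - 1) + b * (1 - \<delta>)"
    and "C0_inf_punct f"
  shows "(real DIM('a) \<noteq> p * (1 - a) \<longrightarrow>
           Lp_norm r (\<lambda>x. norm x powr c * f x)
             \<le> \<bar>p / (real DIM('a) - p * (1 - a))\<bar> powr \<delta>
                * Lp_norm p (\<lambda>x. norm x powr a * norm (grad f x)) powr \<delta>
                * Lp_norm q (\<lambda>x. norm x powr b * f x) powr (1 - \<delta>))
       \<and> (real DIM('a) = p * (1 - a) \<longrightarrow>
           Lp_norm r (\<lambda>x. norm x powr c * f x)
             \<le> p powr \<delta>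
                * Lp_norm p (\<lambda>x. norm x powr a * ln (norm x) * norm (grad f x)) powr \<delta>
                * Lp_norm q (\<lambda>x. norm x powr b * f x) powr (1 - \<delta>))"
proof -
  obtain K where K: "compact K" "0 \<notin> K" "\<And>x. x \<notin> K \<Longrightarrow> f x = 0"
    "\<And>x. (f has_derivative (\<lambda>v. grad f x \<bullet> v)) (at x)"
    "continuous_on UNIV (grad f)" "\<And>x. x \<notin> K \<Longrightarrow> grad f x = 0"
    using C0_facts[OF assms(11)] by blast
  have g: "good K f" using K by (auto simp: good_def)
  define A where "A = (\<integral>x. \<bar>norm x powr (a-1) * f x\<bar> powr p \<partial>lborel)"
  define B where "B = (\<integral>x. \<bar>norm x powr b * f x\<bar> powr q \<partial>lborel)"
  define L where "L = (\<integral>x. \<bar>norm x powr c * f x\<bar> powr r \<partial>lborel)"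
  define G0 where "G0 = (\<integral>x. \<bar>norm x powr a * norm (grad f x)\<bar> powr p \<partial>lborel)"
  define G1 where "G1 = (\<integral>x. \<bar>norm x powr a * ln (norm x) * norm (grad f x)\<bar> powr p \<partial>lborel)"
  have LpL: "Lp_norm r (\<lambda>x. norm x powr c * f x) = L powr (1/r)" by (simp add: Lp_norm_def L_def)
  have LpB: "Lp_norm q (\<lambda>x. norm x powr b * f x) = B powr (1/q)" by (simp add: Lp_norm_def B_def)
  have LpG0: "Lp_norm p (\<lambda>x. norm x powr a * norm (grad f x)) = G0 powr (1/p)" by (simp add: Lp_norm_def G0_def)
  have LpG1: "Lp_norm p (\<lambda>x. norm x powr a * ln (norm x) * norm (grad f x)) = G1 powr (1/p)"
    by (simp add: Lp_norm_def G1_def)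
  have A0: "A \<ge> 0" unfolding A_def by (rule int_nonneg_Lp)
  have B0: "B \<ge> 0" unfolding B_def by (rule int_nonneg_Lp)
  consider "A = 0 \<or> B = 0" | "A > 0" "B > 0" using A0 B0 by linarith
  then show ?thesis
  proof cases
    case 1
    have "AE x in lborel. f x = 0"
      using 1 int_zero_AE[OF g, of p "a-1"] int_zero_AE[OF g, of q b] assms(1,2)
      by (auto simp: A_def B_def)
    then have "L = 0" unfolding L_def by (rule AE_int_zero) (use assms(3) in auto)
    then show ?thesis unfolding LpL by simp
  next
    case 2
    have ip: "L powr (1/r) \<le> (A powr (1/p)) powr \<delta> * (B powr (1/q)) powr (1 - \<delta>)"
      using interp[OF g assms(1,2,3,5,6,9,10)] 2 by (simp add: A_def B_def L_def)
    have fin: "L powr (1/r) \<le> k powr \<delta> * (G powr (1/p)) powr \<delta> * (B powr (1/q)) powr (1 - \<delta>)"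
      if h: "A powr (1/p) \<le> k * G powr (1/p)" and k: "k \<ge> 0" for k G
    proof -
      have "(A powr (1/p)) powr \<delta> \<le> (k * G powr (1/p)) powr \<delta>"
        using h assms(5) by (intro powr_mono2) auto
      also have "\<dots> = k powr \<delta> * (G powr (1/p)) powr \<delta>" using k by (simp add: powr_mult)
      finally have "(A powr (1/p)) powr \<delta> * (B powr (1/q)) powr (1 - \<delta>)
          \<le> k powr \<delta> * (G powr (1/p)) powr \<delta> * (B powr (1/q)) powr (1 - \<delta>)"
        by (rule mult_right_mono) simp
      then show ?thesis using ip by linarith
    qed
    show ?thesis
    proof (intro conjI impI)
      assume n: "real DIM('a) \<noteq> p * (1 - a)"
      have "A powr (1/p) \<le> \<bar>p / (real DIM('a) - p * (1 - a))\<bar> * G0 powr (1/p)"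
        using hardy_pow[OF g assms(1) n] 2 by (simp add: A_def G0_def)
      from fin[OF this] show "Lp_norm r (\<lambda>x. norm x powr c * f x)
             \<le> \<bar>p / (real DIM('a) - p * (1 - a))\<bar> powr \<delta>
                * Lp_norm p (\<lambda>x. norm x powr a * norm (grad f x)) powr \<delta>
                * Lp_norm q (\<lambda>x. norm x powr b * f x) powr (1 - \<delta>)"
        unfolding LpL LpB LpG0 by simp
    next
      assume n: "real DIM('a) = p * (1 - a)"
      have "A powr (1/p) \<le> p * G1 powr (1/p)"
        using hardy_log[OF g assms(1) n] 2 by (simp add: A_def G1_def)
      from fin[OF this] show "Lp_norm r (\<lambda>x. norm x powr c * f x)
             \<le> p powr \<delta>
                * Lp_norm p (\<lambda>x. norm x powr a * ln (norm x) * norm (grad f x)) powr \<delta>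
                * Lp_norm q (\<lambda>x. norm x powr b * f x) powr (1 - \<delta>)"
        unfolding LpL LpB LpG1 using assms(1) by simp
    qed
  qed
qed


end
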